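(* Let $M$ be a $4$-dimensional manifold with local coordinates $(x^1,x^2,x^3,x^4)$ and coordinate frame $e_i=\partial/\partial x^i$. Let $g$ be a Riemannian metric whose components $g_{ij}=g(e_i,e_j)$ are \[(g_{ij})=\begin{pmatrix} A&B&C&B\\ B&A&B&C\\ C&B&A&B\\ B&C&B&A\end{pmatrix},\] where $A,B,C$ are smooth functions with $A>C>B>0$. Let $Q$ be the $(1,1)$-tensor with components $Q_j^k$ given by the matrix with rows $(0,1,0,0),(0,0,1,0),(0,0,0,1),(1,0,0,0)$, and let $P=Q^2$, whose component matrix $(P_j^k)$ has rows $(0,0,1,0),(0,0,0,1),(1,0,0,0),(0,1,0,0)$. Then $(M,g,P)$ is a Riemannian almost product manifold belonging to the class $\mathcal{W}_1\oplus\mathcal{W}_2$, i.e. the tensor $F(x,y,z)=g((\nabla_xP)y,z)$ satisfies \[F(x,y,Pz)+F(y,z,Px)+F(z,x,Py)=0\] for all vector fields $x,y,z$ (equivalently, the Nijenhuis tensor of $P$ vanishes).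
   Context: $\nabla$ denotes the Levi-Civita connection of $g$. One has $Q^4=\mathrm{id}$, $Q^2\neq\pm\mathrm{id}$, $g(Qx,Qy)=g(x,y)$, hence $P^2=\mathrm{id}$, $P\neq\pm\mathrm{id}$, $g(Px,Py)=g(x,y)$, $\mathrm{tr}P=0$. In the Staikova–Gribachev classification of such manifolds, the class $\mathcal{W}_1\oplus\mathcal{W}_2$ (Riemannian product manifolds) is characterized by $F(x,y,Pz)+F(y,z,Px)+F(z,x,Py)=0$. *)

theory Defs
  imports "HOL-Analysis.Analysis"
begin

text \<open>Local coordinate model: the coordinate domain of M is an open set U in R^4,
  the coordinate frame e_1..e_4 is the standard basis (axis i 1), and indices run
  over the 4-element type 4.\<close>

definition pd :: "4 \<Rightarrow> (real^4 \<Rightarrow> real) \<Rightarrow> real^4 \<Rightarrow> real" where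
  "pd i f p = frechet_derivative f (at p) (axis i 1)"

fun Ck :: "nat \<Rightarrow> (real^4) set \<Rightarrow> (real^4 \<Rightarrow> real) \<Rightarrow> bool" where
  "Ck 0 U f = continuous_on U f"
| "Ck (Suc k) U f = (f differentiable_on U \<and> (\<forall>i. Ck k U (pd i f)))"

definition smooth_fun_on :: "(real^4) set \<Rightarrow> (real^4 \<Rightarrow> real) \<Rightarrow> bool" where
  "smooth_fun_on U f = (\<forall>k. Ck k U f)"

definition gmat :: "(real^4 \<Rightarrow> real) \<Rightarrow> (real^4 \<Rightarrow> real) \<Rightarrow> (real^4 \<Rightarrow> real) \<Rightarrow> real^4 \<Rightarrow> real^4^4" where
  "gmat A B C p = (\<chi> i j. if i = j then A p else if j = i + 2 then C p else B p)"

definition gval :: "(real^4 \<Rightarrow> real^4^4) \<Rightarrow> real^4 \<Rightarrow> real^4 \<Rightarrow> real^4 \<Rightarrow> real" where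
  "gval G p x y = (\<Sum>i\<in>UNIV. \<Sum>j\<in>UNIV. x$i * G p $ i $ j * y$j)"

text \<open>Christoffel symbols of the first kind Gamma_{ij,l} = g(nabla_{e_i} e_j, e_l)
  and of the second kind Gamma^m_{ij} of the Levi-Civita connection.\<close>
definition chr1 :: "(real^4 \<Rightarrow> real^4^4) \<Rightarrow> real^4 \<Rightarrow> 4 \<Rightarrow> 4 \<Rightarrow> 4 \<Rightarrow> real" where
  "chr1 G p i j l = (pd i (\<lambda>q. G q $ j $ l) p + pd j (\<lambda>q. G q $ i $ l) p
                     - pd l (\<lambda>q. G q $ i $ j) p) / 2"

definition chr2 :: "(real^4 \<Rightarrow> real^4^4) \<Rightarrow> real^4 \<Rightarrow> 4 \<Rightarrow> 4 \<Rightarrow> 4 \<Rightarrow> real" where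
  "chr2 G p m i j = (\<Sum>l\<in>UNIV. matrix_inv (G p) $ m $ l * chr1 G p i j l)"

definition LC :: "(real^4 \<Rightarrow> real^4^4) \<Rightarrow> real^4 \<Rightarrow> real^4 \<Rightarrow> (real^4 \<Rightarrow> real^4) \<Rightarrow> real^4" where
  "LC G p x Y = (\<chi> m. \<Sum>i\<in>UNIV. x$i * (pd i (\<lambda>q. Y q $ m) p
                      + (\<Sum>j\<in>UNIV. chr2 G p m i j * Y p $ j)))"

text \<open>A (1,1)-tensor with constant components T $ j $ k = T_j^k, acting by
  T e_j = sum_k T_j^k e_k, i.e. (T x)^k = sum_j x^j T_j^k.\<close>
definition tact :: "real^4^4 \<Rightarrow> real^4 \<Rightarrow> real^4" where
  "tact T x = x v* T"

definition Qmat :: "real^4^4" where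
  "Qmat = (\<chi> j k. if k = j + 1 then 1 else 0)"

definition Pmat :: "real^4^4" where
  "Pmat = Qmat ** Qmat"

text \<open>F(x,y,z) = g((nabla_x P) y, z), where (nabla_x P) Y = nabla_x (P Y) - P (nabla_x Y),
  evaluated with Y the constant-coefficient extension of y (F is tensorial).\<close>
definition Ften :: "(real^4 \<Rightarrow> real^4^4) \<Rightarrow> real^4^4 \<Rightarrow> real^4 \<Rightarrow> real^4 \<Rightarrow> real^4 \<Rightarrow> real^4 \<Rightarrow> real" where
  "Ften G T p x y z = gval G p (LC G p x (\<lambda>q. tact T y) - tact T (LC G p x (\<lambda>q. y))) z"

end

theory Submission
  imports Defs
begin

definition ee :: "(4 \<Rightarrow> 4 \<Rightarrow> 4 \<Rightarrow> real) \<Rightarrow> 4 \<Rightarrow> real^4 \<Rightarrow> real^4 \<Rightarrow> real" where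
  "ee d i u v = (\<Sum>j\<in>UNIV. \<Sum>l\<in>UNIV. u$j * v$l * d i j l)"

definition hh :: "(4 \<Rightarrow> 4 \<Rightarrow> 4 \<Rightarrow> real) \<Rightarrow> real^4 \<Rightarrow> real^4 \<Rightarrow> real^4 \<Rightarrow> real" where
  "hh d w u v = (\<Sum>i\<in>UNIV. w$i * ee d i u v)"

definition vv :: "(4 \<Rightarrow> 4 \<Rightarrow> 4 \<Rightarrow> real) \<Rightarrow> real^4 \<Rightarrow> real^4 \<Rightarrow> real^4" where
  "vv c x w = (\<chi> l. \<Sum>i\<in>UNIV. \<Sum>j\<in>UNIV. x$i * w$j * c i j l)"

lemma Pexp: "Pmat = (\<chi> j k. if k = j + 2 then 1 else 0)"
  unfolding Pmat_def Qmat_def matrix_matrix_mult_def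
  by (simp add: vec_eq_iff forall_4 sum_4)

lemma tP1[simp]: "tact Pmat x $ 1 = x $ 3" and tP2[simp]: "tact Pmat x $ 2 = x $ 4"
  and tP3[simp]: "tact Pmat x $ 3 = x $ 1" and tP4[simp]: "tact Pmat x $ 4 = x $ 2"
  by (simp_all add: tact_def vector_matrix_mult_def Pexp sum_4)

lemma ee_sym:
  assumes "\<And>j l. d i j l = (if j = l then a else if l = j + 2 then c else b)"
  shows "ee d i u v = ee d i v u"
  unfolding ee_def by (simp add: assms sum_4 algebra_simps)

lemma ee_P:
  assumes "\<And>j l. d i j l = (if j = l then a else if l = j + 2 then c else b)"
  shows "ee d i (tact Pmat u) v = ee d i u (tact Pmat v)"
  unfolding ee_def by (simp add: assms sum_4 algebra_simps)

lemma T1: "(\<Sum>l\<in>UNIV. (\<Sum>i\<in>UNIV. \<Sum>j\<in>UNIV. x$i * w$j * (d i j l::real)) * z$l) = hh d x w z"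
  unfolding hh_def ee_def by (simp add: sum_4 algebra_simps)
lemma T2: "(\<Sum>l\<in>UNIV. (\<Sum>i\<in>UNIV. \<Sum>j\<in>UNIV. x$i * w$j * (d j i l::real)) * z$l) = hh d w x z"
  unfolding hh_def ee_def by (simp add: sum_4 algebra_simps)
lemma T3: "(\<Sum>l\<in>UNIV. (\<Sum>i\<in>UNIV. \<Sum>j\<in>UNIV. x$i * w$j * (d l i j::real)) * z$l) = hh d z x w"
  unfolding hh_def ee_def by (simp add: sum_4 algebra_simps)

lemma vv_hh:
  fixes d :: "4 \<Rightarrow> 4 \<Rightarrow> 4 \<Rightarrow> real"
  shows "vv (\<lambda>i j l. (d i j l + d j i l - d l i j) / 2) x w \<bullet> z
       = (hh d x w z + hh d w x z - hh d z x w) / 2"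
proof -
  have "vv (\<lambda>i j l. (d i j l + d j i l - d l i j) / 2) x w \<bullet> z =
     ((\<Sum>l\<in>UNIV. (\<Sum>i\<in>UNIV. \<Sum>j\<in>UNIV. x$i * w$j * d i j l) * z$l)
     + (\<Sum>l\<in>UNIV. (\<Sum>i\<in>UNIV. \<Sum>j\<in>UNIV. x$i * w$j * d j i l) * z$l)
     - (\<Sum>l\<in>UNIV. (\<Sum>i\<in>UNIV. \<Sum>j\<in>UNIV. x$i * w$j * d l i j) * z$l)) / 2"
    unfolding vv_def inner_vec_def
    by (simp add: sum_divide_distrib sum.distrib sum_subtractf sum_distrib_left sum_distrib_right algebra_simps diff_divide_distrib add_divide_distrib)
  then show ?thesis by (simp only: T1[where d=d and x=x and w=w and z=z] T2[where d=d and x=x and w=w and z=z] T3[where d=d and x=x and w=w and z=z])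
qed

lemma cyc:
  fixes h :: "'v \<Rightarrow> 'v \<Rightarrow> 'v \<Rightarrow> real"
  assumes sym: "\<And>w u v. h w u v = h w v u" and adj: "\<And>w u v. h w (P u) v = h w u (P v)"
    and PP: "\<And>u. P (P u) = u"
  shows "((h x (P y) (P z) + h (P y) x (P z) - h (P z) x (P y))/2 - (h x y (P (P z)) + h y x (P (P z)) - h (P (P z)) x y)/2)
       + ((h y (P z) (P x) + h (P z) y (P x) - h (P x) y (P z))/2 - (h y z (P (P x)) + h z y (P (P x)) - h (P (P x)) y z)/2)
       + ((h z (P x) (P y) + h (P x) z (P y) - h (P y) z (P x))/2 - (h z x (P (P y)) + h x z (P (P y)) - h (P (P y)) z x)/2) = 0"
proof -
  have a1: "h a (P b) (P c) = h a b c" for a b c using adj[of a b "P c"] PP by simp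
  have a2: "h (P a) b (P c) = h (P a) c (P b)" for a b c
    using adj[of "P a" b c] sym[of "P a" "P b" c] sym[of "P a" b "P c"] by simp
  show ?thesis using a1[of x y z] a1[of y z x] a1[of z x y] a2[of y x z] a2[of z y x] a2[of x z y]
    sym[of x y z] sym[of y z x] sym[of z x y] PP[of x] PP[of y] PP[of z] by (simp only:) (simp add: field_simps)
qed

lemma gval_inner: "gval G p x y = x \<bullet> (G p *v y)"
  unfolding gval_def inner_vec_def matrix_vector_mult_def by (simp add: sum_distrib_left mult.assoc)

lemma gval_swap: "gval (gmat A B C) p x y = gval (gmat A B C) p y x"
  by (simp add: gval_def gmat_def sum_4 algebra_simps)

lemma gval_P: "gval (gmat A B C) p (tact Pmat x) (tact Pmat y) = gval (gmat A B C) p x y"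
  by (simp add: gval_def gmat_def sum_4 algebra_simps)

lemma gval_diff: "gval G p (u - v) z = gval G p u z - gval G p v z"
  by (simp add: gval_def sum_subtractf left_diff_distrib)

lemma PP: "tact Pmat (tact Pmat z) = z"
  by (simp add: vec_eq_iff forall_4)

lemma LC_const: "LC G p x (\<lambda>q. w) = matrix_inv (G p) *v vv (chr1 G p) x w"
  unfolding LC_def chr2_def vv_def matrix_vector_mult_def pd_def
  by (simp add: vec_eq_iff sum_4 algebra_simps)

lemma gval_quad:
  assumes "a > c" "c > b" "b > 0" "x \<noteq> 0"
  shows "gval (gmat (\<lambda>_. a) (\<lambda>_. b) (\<lambda>_. c)) p x x > 0"
proof -
  define s where "s = x$1 + x$2 + x$3 + x$4"
  define t where "t = x$1 - x$2 + x$3 - x$4"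
  define u where "u = x$1 - x$3"
  define w where "w = x$2 - x$4"
  have eq: "gval (gmat (\<lambda>_. a) (\<lambda>_. b) (\<lambda>_. c)) p x x
      = (a + 2*b + c) * s^2 / 4 + (a - 2*b + c) * t^2/4 + (a - c) * (u^2 + w^2) / 2"
    unfolding s_def t_def u_def w_def
    by (simp add: gval_def gmat_def sum_4 power2_eq_square algebra_simps divide_simps)
  have ne: "s \<noteq> 0 \<or> t \<noteq> 0 \<or> u \<noteq> 0 \<or> w \<noteq> 0"
  proof (rule ccontr)
    assume "\<not> ?thesis"
    then have "s = 0" "t = 0" "u = 0" "w = 0" by auto
    then have "x$1 = 0" "x$2 = 0" "x$3 = 0" "x$4 = 0" unfolding s_def t_def u_def w_def by linarith+
    then have "x = 0" by (simp add: vec_eq_iff forall_4)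
    with assms show False by simp
  qed
  have p1: "(a + 2*b + c) * s^2 / 4 \<ge> 0" "(a - 2*b + c) * t^2/4 \<ge> 0" "(a - c) * (u^2 + w^2) / 2 \<ge> 0"
    using assms by auto
  have "(a + 2*b + c) * s^2 / 4 > 0 \<or> (a - 2*b + c) * t^2/4 > 0 \<or> (a - c) * (u^2 + w^2) / 2 > 0"
    using ne assms by (auto simp: add_pos_nonneg add_nonneg_pos)
  then show ?thesis unfolding eq using p1 by linarith
qed


theorem lemma3p1:
  fixes U :: "(real^4) set" and A B C :: "real^4 \<Rightarrow> real"
  assumes "open U"
    and "smooth_fun_on U A" and "smooth_fun_on U B" and "smooth_fun_on U C"
    and "\<And>p. p \<in> U \<Longrightarrow> A p > C p \<and> C p > B p \<and> B p > 0"
  shows "Pmat = (\<chi> j k. if k = j + 2 then 1 else 0)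
    \<and> Pmat ** Pmat = mat 1 \<and> Pmat \<noteq> mat 1 \<and> Pmat \<noteq> - mat 1 \<and> trace Pmat = 0
    \<and> (\<forall>p\<in>U. \<forall>x. x \<noteq> 0 \<longrightarrow> gval (gmat A B C) p x x > 0)
    \<and> (\<forall>p\<in>U. \<forall>x y. gval (gmat A B C) p (tact Pmat x) (tact Pmat y) = gval (gmat A B C) p x y)
    \<and> (\<forall>p\<in>U. \<forall>x y z.
         Ften (gmat A B C) Pmat p x y (tact Pmat z) + Ften (gmat A B C) Pmat p y z (tact Pmat x)
       + Ften (gmat A B C) Pmat p z x (tact Pmat y) = 0)"
proof -
  have P2: "Pmat ** Pmat = mat 1"
    by (simp add: Pexp matrix_matrix_mult_def mat_def vec_eq_iff forall_4 sum_4)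
  have P11: "Pmat $ 1 $ 1 = 0" by (simp add: Pexp)
  have P3: "Pmat \<noteq> mat 1"
  proof
    assume h: "Pmat = mat 1"
    have "(mat 1 :: real^4^4) $ 1 $ 1 = 1" by (simp add: mat_def)
    with P11 h show False by simp
  qed
  have P4: "Pmat \<noteq> - mat 1"
  proof
    assume h: "Pmat = - mat 1"
    have "(- mat 1 :: real^4^4) $ 1 $ 1 = -1" by (simp add: mat_def)
    with P11 h show False by simp
  qed
  have P5: "trace Pmat = 0" by (simp add: trace_def sum_4 Pexp)
  have pos: "gval (gmat A B C) p x x > 0" if "p \<in> U" "x \<noteq> 0" for p x
  proof -
    have "gval (gmat A B C) p x x = gval (gmat (\<lambda>_. A p) (\<lambda>_. B p) (\<lambda>_. C p)) p x x"
      by (simp add: gval_def gmat_def)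
    also have "\<dots> > 0" using assms(5)[OF that(1)] that(2) by (intro gval_quad) auto
    finally show ?thesis .
  qed
  have Fz: "Ften (gmat A B C) Pmat p x y (tact Pmat z) + Ften (gmat A B C) Pmat p y z (tact Pmat x)
       + Ften (gmat A B C) Pmat p z x (tact Pmat y) = 0" if pU: "p \<in> U" for p x y z
  proof -
    define G where "G = gmat A B C"
    define M where "M = G p"
    have ker: "\<forall>v. M *v v = 0 \<longrightarrow> v = 0"
    proof (intro allI impI)
      fix v assume "M *v v = 0"
      then have "gval G p v v = 0" by (simp add: gval_inner M_def)
      then show "v = 0" using pos[OF pU, of v] unfolding G_def by fastforce
    qed
    then obtain B' where "B' ** M = mat 1" using matrix_left_invertible_ker by blast
    then have "M ** B' = mat 1" using matrix_left_right_inverse by blast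
    with \<open>B' ** M = mat 1\<close> have "\<exists>A'. M ** A' = mat 1 \<and> A' ** M = mat 1" by blast
    from someI_ex[OF this] have MI: "M ** matrix_inv M = mat 1" unfolding matrix_inv_def by blast
    have MM: "M *v (matrix_inv M *v v) = v" for v
      by (simp add: matrix_vector_mul_assoc MI)
    define ch where "ch = chr1 G p"
    have g1: "gval G p (matrix_inv (G p) *v v) c = v \<bullet> c" for v c
    proof -
      have "gval G p (matrix_inv (G p) *v v) c = gval G p c (matrix_inv (G p) *v v)"
        unfolding G_def by (rule gval_swap)
      also have "\<dots> = v \<bullet> c" using MM unfolding M_def by (simp add: gval_inner inner_commute)
      finally show ?thesis .
    qed
    have g2: "gval G p (tact Pmat (matrix_inv (G p) *v v)) c = v \<bullet> tact Pmat c" for v c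
    proof -
      have "gval G p (tact Pmat (matrix_inv (G p) *v v)) c
          = gval G p (tact Pmat (matrix_inv (G p) *v v)) (tact Pmat (tact Pmat c))" by (simp add: PP)
      also have "\<dots> = gval G p (matrix_inv (G p) *v v) (tact Pmat c)" unfolding G_def by (rule gval_P)
      also have "\<dots> = v \<bullet> tact Pmat c" by (rule g1)
      finally show ?thesis .
    qed
    have Fform: "Ften G Pmat p a b c = vv ch a (tact Pmat b) \<bullet> c - vv ch a b \<bullet> tact Pmat c" for a b c
      unfolding Ften_def LC_const gval_diff g1 g2 ch_def by simp
    define d where "d = (\<lambda>i j l. pd i (\<lambda>q. G q $ j $ l) p)"
    have chd: "ch = (\<lambda>i j l. (d i j l + d j i l - d l i j) / 2)"
      unfolding ch_def d_def by (intro ext) (simp add: chr1_def)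
    have dform: "d i j l = (if j = l then pd i A p else if l = j + 2 then pd i C p else pd i B p)" for i j l
    proof -
      have "(\<lambda>q. G q $ j $ l) = (if j = l then A else if l = j + 2 then C else B)"
        by (auto simp: G_def gmat_def)
      then show ?thesis unfolding d_def by simp
    qed
    have hsym: "hh d w u v = hh d w v u" for w u v
      unfolding hh_def using ee_sym[OF dform] by simp
    have hadj: "hh d w (tact Pmat u) v = hh d w u (tact Pmat v)" for w u v
      unfolding hh_def using ee_P[OF dform] by simp
    show ?thesis
      unfolding G_def[symmetric] Fform chd vv_hh
      by (rule cyc[where h="hh d" and P="tact Pmat", OF hsym hadj PP])
  qed
  show ?thesis
    using Pexp P2 P3 P4 P5 pos Fz gval_P by blast
qed

end
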